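(* Consider the $L$-user Broadcast Malayter-Chance-Love (BMCL) scheme described in the context, with perfect feedback ($\sigma_f^2=0$) and broadcast SNR $P/\sigma_b^2$. Its maximum (symmetric) sum rate is $$C_{sum}\left(\frac{P}{\sigma_b^2}\right)=-L\log_2(\beta_\infty),$$ where $\beta_\infty\in(0,1)$ is the value of $\beta$ satisfying $$\frac{(1-\beta^{2L})^2}{L^2\beta^{2L}(1-\beta^2)}=\frac{P}{\sigma_b^2 L}.$$
   Context: Channel: real $L$-user AWGN broadcast channel with feedback. At channel use $t$ the transmitter sends $x[t]\in\mathbb{R}$, receiver $\ell$ observes $y_\ell[t]=x[t]+n^b_\ell[t]$ with $n^b_\ell[t]\sim\mathcal{N}(0,\sigma_b^2)$ i.i.d., and feeds back $z_\ell[t]=y_\ell[t]+n^f_\ell[t]$, $n^f_\ell[t]\sim\mathcal{N}(0,\sigma_f^2)$ i.i.d.; perfect feedback means $\sigma_f^2=0$. Average power constraint $\frac1N\mathbb{E}\sum_{t=1}^N x[t]^2\le P$. Each user $\ell$ has a message of $K_\ell=NR_\ell$ bits, all users have equal rate $R_\ell$, and the sum rate is $R_{sum}=LR_\ell$. BMCL scheme ($L$ a power of $2$, blocklength $N$, $\hat N=N-L$, power sharing parameter $\gamma\in(0,1)$): user $\ell$'s message is mapped to a uniformly distributed PAM symbol $\Theta_\ell$ with $\mathbb{E}|\Theta_\ell|^2=(1-\gamma)NP/L$; in the first $L$ channel uses $x[t]=\Theta_t$, and the remaining $\hat N$ uses carry linear feedback-based noise cancellation. For $\beta\in(0,1)$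 the base encoding matrix $\mathbf{F}\in\mathbb{R}^{(\hat N+1)\times(\hat N+1)}$ has entries $\mathbf{F}[t,m]=0$ for $t\le m$ and $\mathbf{F}[t,m]=\frac{-(1-\beta^{2L})}{L\beta}\beta^{L\lfloor (t-m-1)/L\rfloor-\mathrm{mod}(t-m-1,L)}$ for $t>m$. For user $\ell$, $\mathbf{C}_\ell$ is the $(\hat N+1)\times(\hat N+1)$ diagonal matrix whose $i$-th diagonal entry is the entry in position $\mathrm{mod}(i,L)$ (positions counted cyclically) of the $\ell$-th row $\mathbf{c}_\ell$ of an $L\times L$ Hadamard matrix; user $\ell$'s encoding matrix is $\mathbf{F}_\ell=\mathbf{C}_\ell\mathbf{F}\mathbf{C}_\ell^T$. Receiver $\ell$ sees $\mathbf{y}_\ell=\mathbf{e}_1\Theta_\ell+(\mathbf{I}+\mathbf{F}_\ell)\mathbf{n}^b_\ell+\mathbf{F}_\ell\mathbf{n}^f_\ell+\sum_{\ell'\ne\ell}\mathbf{F}_{\ell'}(\mathbf{n}^b_{\ell'}+\mathbf{n}^f_{\ell'})$ and estimates $\hat\Theta_\ell=\mathbf{q}^T\mathbf{C}_\ell\mathbf{y}_\ell$ with the (asymptotic) combiner $\mathbf{q}=[1,\beta,\beta^2,\dots,\beta^{\hat N}]^T$. For fixed $\gamma$, $\beta=\beta(\gamma)\in(0,1)$ is chosen to satisfy $\frac{(1-\beta^{2L})^2}{L^2\beta^{2L}(1-\beta^2)}=\frac{P\gamma}{L(\sigma_b^2+\sigma_f^2)}$. The output SNR of user $\ell$ is $$SNR_\ell(\gamma)=\frac{\frac1L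 PN(1-\gamma)}{\sigma_b^2\|\mathbf{q}^T(\mathbf{I}+\mathbf{F})\|_2^2+(\sigma_b^2+\sigma_f^2)\sum_{i\ne\ell}\|\mathbf{q}^T\mathbf{C}_\ell\mathbf{C}_i\mathbf{F}\|_2^2+\sigma_f^2\|\mathbf{q}^T\mathbf{F}\|_2^2},$$ and its average block error rate is $\mathbb{P}_{e,\ell}=2\left(1-\frac{1}{2^{2NR_\ell}}\right)Q\left(\sqrt{\frac{6}{2^{2NR_\ell}-1}SNR_\ell(\gamma)}\right)$, where $Q$ is the standard Gaussian tail function. A per-user rate $R_\ell$ is achievable if for some $\gamma\in(0,1)$, $\mathbb{P}_{e,\ell}\to0$ as $N\to\infty$; the maximum sum rate $C_{sum}(P/\sigma_b^2)$ is the supremum of $LR_\ell$ over achievable $R_\ell$. *)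

theory Defs
  imports "HOL-Probability.Probability"
begin

definition gaussQ :: "real \<Rightarrow> real" where
  "gaussQ x = (LBINT t:{x<..}. std_normal_density t)"

text \<open>Sylvester Hadamard matrix (0-indexed rows/columns):
  entry (l, j) = (-1)^(popcount (l AND j)).\<close>
definition hadamard :: "nat \<Rightarrow> nat \<Rightarrow> real" where
  "hadamard l j = (-1) ^ card {k. bit l k \<and> bit j k}"

text \<open>Base encoding matrix F (0-indexed, t, m in {0..Nhat}).\<close>
definition Fmat :: "nat \<Rightarrow> real \<Rightarrow> nat \<Rightarrow> nat \<Rightarrow> real" where
  "Fmat L \<beta> t m =
     (if t \<le> m then 0
      else - (1 - \<beta> ^ (2 * L)) / (real L * \<beta>) *
           \<beta> powi (int L * int ((t - m - 1) div L) - int ((t - m - 1) mod L)))"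

text \<open>Diagonal entry i (0-indexed) of C_l: entry of row l of the Hadamard matrix
  at cyclic position i mod L.\<close>
definition Cdiag :: "nat \<Rightarrow> nat \<Rightarrow> nat \<Rightarrow> real" where
  "Cdiag L l i = hadamard l (i mod L)"

definition qvec :: "real \<Rightarrow> nat \<Rightarrow> real" where
  "qvec \<beta> i = \<beta> ^ i"

definition normIF :: "nat \<Rightarrow> real \<Rightarrow> nat \<Rightarrow> real" where
  "normIF L \<beta> Nh = (\<Sum>m\<le>Nh. (\<Sum>t\<le>Nh. qvec \<beta> t * ((if t = m then 1 else 0) + Fmat L \<beta> t m))\<^sup>2)"

definition normCCF :: "nat \<Rightarrow> real \<Rightarrow> nat \<Rightarrow> nat \<Rightarrow> nat \<Rightarrow> real" where
  "normCCF L \<beta> Nh l i = (\<Sum>m\<le>Nh. (\<Sum>t\<le>Nh. qvec \<beta> t * Cdiag L l t * Cdiag L i t * Fmat L \<beta> t m)\<^sup>2)"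

definition normF :: "nat \<Rightarrow> real \<Rightarrow> nat \<Rightarrow> real" where
  "normF L \<beta> Nh = (\<Sum>m\<le>Nh. (\<Sum>t\<le>Nh. qvec \<beta> t * Fmat L \<beta> t m)\<^sup>2)"

text \<open>Output SNR of user l (0-indexed, l < L), blocklength N, Nhat = N - L.\<close>
definition SNR :: "nat \<Rightarrow> real \<Rightarrow> real \<Rightarrow> real \<Rightarrow> real \<Rightarrow> real \<Rightarrow> nat \<Rightarrow> nat \<Rightarrow> real" where
  "SNR L P sb2 sf2 \<beta> \<gamma> N l =
     (P * real N * (1 - \<gamma>) / real L) /
     (sb2 * normIF L \<beta> (N - L)
      + (sb2 + sf2) * (\<Sum>i\<in>{0..<L} - {l}. normCCF L \<beta> (N - L) l i)
      + sf2 * normF L \<beta> (N - L))"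

definition Pe :: "nat \<Rightarrow> real \<Rightarrow> real \<Rightarrow> real \<Rightarrow> real \<Rightarrow> real \<Rightarrow> nat \<Rightarrow> real \<Rightarrow> nat \<Rightarrow> real" where
  "Pe L P sb2 sf2 \<beta> \<gamma> N R l =
     2 * (1 - 1 / 2 powr (2 * real N * R)) *
     gaussQ (sqrt (6 / (2 powr (2 * real N * R) - 1) * SNR L P sb2 sf2 \<beta> \<gamma> N l))"

definition beta_eq :: "nat \<Rightarrow> real \<Rightarrow> real \<Rightarrow> real \<Rightarrow> real \<Rightarrow> real \<Rightarrow> bool" where
  "beta_eq L P sb2 sf2 \<gamma> \<beta> \<longleftrightarrow> 0 < \<beta> \<and> \<beta> < 1 \<and>
     (1 - \<beta> ^ (2 * L))\<^sup>2 / ((real L)\<^sup>2 * \<beta> ^ (2 * L) * (1 - \<beta>\<^sup>2))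
       = P * \<gamma> / (real L * (sb2 + sf2))"

definition achievable :: "nat \<Rightarrow> real \<Rightarrow> real \<Rightarrow> real \<Rightarrow> real \<Rightarrow> bool" where
  "achievable L P sb2 sf2 R \<longleftrightarrow> R \<ge> 0 \<and>
     (\<exists>\<gamma>. 0 < \<gamma> \<and> \<gamma> < 1 \<and> (\<exists>\<beta>. beta_eq L P sb2 sf2 \<gamma> \<beta> \<and>
        (\<forall>l<L. (\<lambda>N. Pe L P sb2 sf2 \<beta> \<gamma> N R l) \<longlonglongrightarrow> 0)))"

definition Csum :: "nat \<Rightarrow> real \<Rightarrow> real \<Rightarrow> real \<Rightarrow> real" where
  "Csum L P sb2 sf2 = Sup ((\<lambda>R. real L * R) ` {R. achievable L P sb2 sf2 R})"

end

theory Submission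
  imports Defs
begin

lemma bit_lt: "bit (l::nat) k \<Longrightarrow> k < l"
proof (rule ccontr)
  assume b: "bit l k" and "\<not> k < l"
  then have "l < 2 ^ k" using less_exp[of k] by linarith
  then have "l div 2 ^ k = 0" by simp
  with b show False by (simp add: bit_iff_odd)
qed

lemma bits_finite: "finite {k. bit (l::nat) k \<and> bit j k}"
proof -
  have "{k. bit (l::nat) k \<and> bit j k} \<subseteq> {..<l}"
    using bit_lt by auto
  then show ?thesis using finite_subset by blast
qed

lemma had_step:
  assumes "e < 2" "c < 2"
  shows "hadamard (e + 2*a) (c + 2*b) = (if e = 1 \<and> c = 1 then -1 else 1) * hadamard a b"
proof -
  let ?S = "{k. bit a k \<and> bit b k}"
  have eq: "{k. bit (e + 2*a) k \<and> bit (c + 2*b) k} =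
      (if e = 1 \<and> c = 1 then {0} else {}) \<union> Suc ` ?S"
  proof (rule set_eqI)
    fix k show "k \<in> {k. bit (e + 2*a) k \<and> bit (c + 2*b) k} \<longleftrightarrow>
      k \<in> (if e = 1 \<and> c = 1 then {0} else {}) \<union> Suc ` ?S"
    proof (cases k)
      case 0
      have "e = 0 \<or> e = 1" "c = 0 \<or> c = 1" using assms by auto
      then show ?thesis using 0 by (auto simp: bit_0)
    next
      case (Suc k')
      have "(e + 2*a) div 2 = a" "(c + 2*b) div 2 = b" using assms by auto
      then show ?thesis using Suc by (auto simp: bit_Suc)
    qed
  qed
  have fin: "finite ?S" by (rule bits_finite)
  have "card (Suc ` ?S) = card ?S" by (simp add: card_image)
  have c: "card {k. bit (e + 2*a) k \<and> bit (c + 2*b) k} = (if e = 1 \<and> c = 1 then 1 else 0) + card ?S"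
    unfolding eq using fin by (auto simp: card_image)
  show ?thesis unfolding hadamard_def c by (simp add: power_add)
qed

lemma sum_double: "(\<Sum>j<2*n. f j) = (\<Sum>j<n. f (2*j) + f (2*j+1::nat)) " for f :: "nat \<Rightarrow> real"
  by (induction n) (auto simp: mult_2)

lemma had_orth:
  "\<forall>l i. l < 2^k \<longrightarrow> i < 2^k \<longrightarrow> l \<noteq> i \<longrightarrow> (\<Sum>j<2^k. hadamard l j * hadamard i j) = 0"
proof (induction k)
  case 0
  then show ?case by auto
next
  case (Suc k)
  show ?case
  proof (intro allI impI)
    fix l i :: nat
    assume l: "l < 2 ^ Suc k" and i: "i < 2 ^ Suc k" and ne: "l \<noteq> i"
    define l' where "l' = l div 2"
    define i' where "i' = i div 2"
    define e where "e = l mod 2"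
    define c where "c = i mod 2"
    have lx: "l = e + 2 * l'" "i = c + 2*i'" unfolding l'_def i'_def e_def c_def by auto
    have ec: "e < 2" "c < 2" unfolding e_def c_def by auto
    have bnd: "l' < 2^k" "i' < 2^k" using l i unfolding l'_def i'_def by auto
    have h0: "hadamard l (2*j) * hadamard i (2*j) = hadamard l' j * hadamard i' j" for j
      using had_step[of e 0 l' j] had_step[of c 0 i' j] ec lx by simp
    have h1: "hadamard l (2*j+1) * hadamard i (2*j+1) =
        (if e = c then 1 else -1) * (hadamard l' j * hadamard i' j)" for j
      using had_step[of e 1 l' j] had_step[of c 1 i' j] ec lx
      by (auto simp: add.commute)
    have "(\<Sum>j<2^Suc k. hadamard l j * hadamard i j) =
        (\<Sum>j<2^k. (1 + (if e = c then 1 else -1)) * (hadamard l' j * hadamard i' j))"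
      by (simp only: power_Suc sum_double h0 h1) (simp add: algebra_simps)
    also have "\<dots> = 0"
    proof (cases "e = c")
      case True
      then have "l' \<noteq> i'" using lx ne by auto
      then have "(\<Sum>j<2^k. hadamard l' j * hadamard i' j) = 0" using Suc.IH bnd by blast
      then show ?thesis using True by (simp add: sum_distrib_left[symmetric])
    next
      case False
      then show ?thesis by simp
    qed
    finally show "(\<Sum>j<2^Suc k. hadamard l j * hadamard i j) = 0" .
  qed
qed

lemma sum_rot: "0 < (L::nat) \<Longrightarrow> (\<Sum>r<L. g ((n + r) mod L)) = (\<Sum>j<L. (g j::real))"
proof (induction n)
  case 0
  then show ?case by simp
next
  case (Suc n)
  let ?h = "\<lambda>r. g ((n + r) mod L)"
  have a: "(\<Sum>r<Suc L. ?h r) = ?h 0 + (\<Sum>r<L. ?h (Suc r))" by (rule sum.lessThan_Suc_shift)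
  have b: "(\<Sum>r<Suc L. ?h r) = (\<Sum>r<L. ?h r) + ?h L" by simp
  have c: "?h L = ?h 0" by simp
  have "(\<Sum>r<L. g ((Suc n + r) mod L)) = (\<Sum>r<L. ?h (Suc r))" by simp
  also have "\<dots> = (\<Sum>r<L. ?h r)" using a b c by linarith
  finally show ?case using Suc by simp
qed

lemma Fterm:
  assumes b: "0 < b" and L: "0 < L"
  shows "b^(m+1+k) * Fmat L b (m+1+k) m = -(1 - b^(2*L))/real L * b^m * (b^(2*L))^(k div L)"
proof -
  define q where "q = k div L"
  define r where "r = k mod L"
  have k: "k = L*q + r" unfolding q_def r_def by simp
  have pw: "b powi (int L * int q - int r) = b^(L*q) / b^r"
    using b by (simp add: power_int_diff flip: of_nat_mult)
  have "b^(m+1+k) * Fmat L b (m+1+k) m =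
      b^(m+1+k) * (- (1 - b ^ (2 * L)) / (real L * b) * (b^(L*q) / b^r))"
    unfolding Fmat_def using pw by (simp add: q_def r_def)
  also have "\<dots> = -(1 - b^(2*L))/real L * b^m * (b^(L*q) * b^(L*q))"
    using b L unfolding k by (simp add: power_add field_simps)
  also have "b^(L*q) * b^(L*q) = (b^(2*L))^q"
    by (simp add: power_mult[symmetric] power_add[symmetric] mult_2 add_mult_distrib)
  finally show ?thesis unfolding q_def .
qed

lemma col_reindex:
  assumes "m \<le> Nh"
  shows "(\<Sum>t\<le>Nh. w t * Fmat L b t m) = (\<Sum>k<Nh-m. w (m+1+k) * Fmat L b (m+1+k) m)"
proof -
  have "(\<Sum>t\<le>Nh. w t * Fmat L b t m) = (\<Sum>t\<in>{m+1..<Nh+1}. w t * Fmat L b t m)"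
    by (rule sum.mono_neutral_right) (auto simp: Fmat_def)
  also have "\<dots> = (\<Sum>t\<in>{0+(m+1)..<(Nh-m)+(m+1)}. w t * Fmat L b t m)"
    using assms by simp
  also have "\<dots> = (\<Sum>k\<in>{0..<Nh-m}. w (k+(m+1)) * Fmat L b (k+(m+1)) m)"
    by (rule sum.shift_bounds_nat_ivl)
  finally show ?thesis by (simp add: lessThan_atLeast0 add.commute add.left_commute)
qed

lemma H_formula:
  assumes L: "0 < L"
  shows "1 - (1-a)/real L * (\<Sum>k<K. a^(k div L)) =
    a^(K div L) * (1 - real (K mod L) * (1-a)/real L)"
proof (induction K)
  case 0
  then show ?case by simp
next
  case (Suc K)
  show ?case
  proof (cases "Suc (K mod L) = L")
    case True
    then have d: "Suc K div L = Suc (K div L)" "Suc K mod L = 0"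
      by (auto simp: div_Suc mod_Suc)
    have "1 - (1-a)/real L * (\<Sum>k<Suc K. a^(k div L)) =
        a^(K div L) * (1 - real (K mod L) * (1-a)/real L) - (1-a)/real L * a^(K div L)"
      using Suc.IH by (simp add: algebra_simps)
    also have "\<dots> = a^(K div L) * (1 - real (Suc (K mod L)) * (1-a)/real L)"
      by (simp add: algebra_simps add_divide_distrib diff_divide_distrib)
    also have "\<dots> = a^(Suc K div L) * (1 - real (Suc K mod L) * (1-a)/real L)"
      unfolding d using True L by (simp add: field_simps)
    finally show ?thesis .
  next
    case False
    then have d: "Suc K div L = K div L" "Suc K mod L = Suc (K mod L)"
      by (auto simp: div_Suc mod_Suc)
    have "1 - (1-a)/real L * (\<Sum>k<Suc K. a^(k div L)) =
        a^(K div L) * (1 - real (K mod L) * (1-a)/real L) - (1-a)/real L * a^(K div L)"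
      using Suc.IH by (simp add: algebra_simps)
    also have "\<dots> = a^(K div L) * (1 - real (Suc (K mod L)) * (1-a)/real L)"
      by (simp add: algebra_simps add_divide_distrib diff_divide_distrib)
    finally show ?thesis unfolding d .
  qed
qed

lemma W_formula:
  assumes L: "0 < L" and blk: "\<And>n. (\<Sum>r<L. s (n*L + r)) = (0::real)"
  shows "(\<Sum>k<K. a^(k div L) * s k) = a^(K div L) * (\<Sum>k\<in>{L*(K div L)..<K}. s k)"
proof (induction K)
  case 0
  then show ?case by simp
next
  case (Suc K)
  have le: "L*(K div L) \<le> K" by simp
  have split: "(\<Sum>k\<in>{L*(K div L)..<Suc K}. s k) = (\<Sum>k\<in>{L*(K div L)..<K}. s k) + s K"
    using le by (subst sum.atLeastLessThan_Suc) auto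
  have "(\<Sum>k<Suc K. a^(k div L) * s k) = a^(K div L) * (\<Sum>k\<in>{L*(K div L)..<Suc K}. s k)"
    using Suc.IH split by (simp add: algebra_simps)
  also have "\<dots> = a^(Suc K div L) * (\<Sum>k\<in>{L*(Suc K div L)..<Suc K}. s k)"
  proof (cases "Suc (K mod L) = L")
    case True
    then have d: "Suc K div L = Suc (K div L)"
      by (auto simp: div_Suc mod_Suc)
    have sk: "Suc K = L * (K div L) + L"
      using mult_div_mod_eq[of L K] True by linarith
    have "(\<Sum>k\<in>{L*(K div L)..<Suc K}. s k) = (\<Sum>k\<in>{0 + L*(K div L)..<L + L*(K div L)}. s k)"
      using sk by (simp add: add.commute)
    also have "\<dots> = (\<Sum>r\<in>{0..<L}. s (r + L*(K div L)))"
      by (rule sum.shift_bounds_nat_ivl)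
    also have "\<dots> = 0" using blk[of "K div L"]
      by (simp add: lessThan_atLeast0 add.commute mult.commute)
    finally show ?thesis unfolding d using sk by simp
  next
    case False
    then have d: "Suc K div L = K div L"
      by (auto simp: div_Suc mod_Suc)
    show ?thesis unfolding d ..
  qed
  finally show ?case .
qed

lemma colIF:
  assumes b: "0 < b" "b < 1" and L: "0 < L" and m: "m \<le> Nh"
  shows "\<bar>\<Sum>t\<le>Nh. qvec b t * ((if t = m then 1 else 0) + Fmat L b t m)\<bar>
           \<le> b^m * (b^(2*L))^((Nh-m) div L)"
proof -
  define a where "a = b^(2*L)"
  define K where "K = Nh - m"
  have a: "0 < a" "a \<le> 1" unfolding a_def using b by (auto simp: power_le_one)
  have "(\<Sum>t\<le>Nh. qvec b t * ((if t = m then 1 else 0) + Fmat L b t m)) =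
      (\<Sum>t\<le>Nh. qvec b t * (if t = m then 1 else 0)) + (\<Sum>t\<le>Nh. qvec b t * Fmat L b t m)"
    by (simp add: distrib_left sum.distrib)
  also have "(\<Sum>t\<le>Nh. qvec b t * (if t = m then 1 else 0)) = b^m"
    using m by (simp add: qvec_def if_distrib sum.delta cong: if_cong)
  also have "(\<Sum>t\<le>Nh. qvec b t * Fmat L b t m) = (\<Sum>k<K. b^(m+1+k) * Fmat L b (m+1+k) m)"
    unfolding K_def using col_reindex[OF m, of "qvec b" L b] by (simp add: qvec_def)
  also have "\<dots> = (\<Sum>k<K. -(1 - a)/real L * b^m * a^(k div L))"
    unfolding a_def using Fterm[OF b(1) L] by simp
  also have "\<dots> = (-(1 - a)/real L * b^m) * (\<Sum>k<K. a^(k div L))"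
    by (simp add: sum_distrib_left mult.assoc)
  finally have e: "(\<Sum>t\<le>Nh. qvec b t * ((if t = m then 1 else 0) + Fmat L b t m)) =
      b^m * (1 - (1-a)/real L * (\<Sum>k<K. a^(k div L)))"
    using L by (simp add: field_simps)
  have r: "real (K mod L) < real L" using L by simp
  have "real (K mod L) * (1-a) / real L \<le> 1"
  proof -
    have "real (K mod L) * (1-a) \<le> real L * 1"
      using r a by (intro mult_mono) auto
    then show ?thesis using L by (simp add: divide_le_eq)
  qed
  moreover have "0 \<le> real (K mod L) * (1-a) / real L" using a by simp
  ultimately have "\<bar>1 - real (K mod L) * (1-a) / real L\<bar> \<le> 1" by linarith
  then have "\<bar>a^(K div L) * (1 - real (K mod L) * (1-a)/real L)\<bar> \<le> a^(K div L)"
    using a by (simp add: abs_mult mult_left_le)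
  then show ?thesis unfolding e H_formula[OF L] using b
    by (simp add: abs_mult a_def K_def mult_left_mono)
qed

lemma had_abs: "\<bar>hadamard l j\<bar> = 1"
  by (simp add: hadamard_def)

lemma colCC:
  assumes b: "0 < b" "b < 1" and Lk: "L = 2^kk" and li: "l < L" "i < L" "l \<noteq> i" and m: "m \<le> Nh"
  shows "\<bar>\<Sum>t\<le>Nh. qvec b t * Cdiag L l t * Cdiag L i t * Fmat L b t m\<bar>
           \<le> b^m * (b^(2*L))^((Nh-m) div L)"
proof -
  have L: "0 < L" using Lk by simp
  define a where "a = b^(2*L)"
  define K where "K = Nh - m"
  define s where "s k = Cdiag L l (m+1+k) * Cdiag L i (m+1+k)" for k
  have a: "0 < a" "a \<le> 1" unfolding a_def using b by (auto simp: power_le_one)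
  have blk: "(\<Sum>r<L. s (n*L + r)) = 0" for n
  proof -
    have "(\<Sum>r<L. s (n*L + r)) = (\<Sum>r<L. (\<lambda>j. hadamard l j * hadamard i j) ((m + 1 + r) mod L))"
    proof (rule sum.cong[OF refl])
      fix r
      have "(m + 1 + (n*L + r)) mod L = (m + 1 + r) mod L"
        by (metis add.commute add.left_commute mod_mult_self2 mult.commute)
      then show "s (n*L + r) = (\<lambda>j. hadamard l j * hadamard i j) ((m + 1 + r) mod L)"
        unfolding s_def Cdiag_def by simp
    qed
    also have "\<dots> = (\<Sum>j<L. hadamard l j * hadamard i j)"
      by (rule sum_rot[OF L])
    also have "\<dots> = 0" using had_orth[of kk] li Lk by blast
    finally show ?thesis .
  qed
  have "(\<Sum>t\<le>Nh. qvec b t * Cdiag L l t * Cdiag L i t * Fmat L b t m) = (\<Sum>k<K. (qvec b (m+1+k) * Cdiag L l (m+1+k) * Cdiag L i (m+1+k)) * Fmat L b (m+1+k) m)"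
    unfolding K_def by (rule col_reindex[OF m])
  also have "\<dots> = (\<Sum>k<K. s k * (b^(m+1+k) * Fmat L b (m+1+k) m))"
    by (simp add: s_def qvec_def algebra_simps)
  also have "\<dots> = (\<Sum>k<K. s k * (-(1 - a)/real L * b^m * a^(k div L)))"
    unfolding a_def using Fterm[OF b(1) L] by simp
  also have "\<dots> = -((1 - a)/real L * b^m) * (\<Sum>k<K. a^(k div L) * s k)"
    unfolding sum_distrib_left by (rule sum.cong[OF refl]) (use L in \<open>simp add: field_simps\<close>)
  also have "\<dots> = -((1 - a)/real L * b^m) * (a^(K div L) * (\<Sum>k\<in>{L*(K div L)..<K}. s k))"
    using W_formula[OF L blk] by simp
  finally have e: "(\<Sum>t\<le>Nh. qvec b t * Cdiag L l t * Cdiag L i t * Fmat L b t m) =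
     -((1 - a)/real L * b^m) * (a^(K div L) * (\<Sum>k\<in>{L*(K div L)..<K}. s k))" .
  have sabs: "\<bar>s k\<bar> = 1" for k unfolding s_def Cdiag_def by (simp add: abs_mult had_abs)
  have "\<bar>\<Sum>k\<in>{L*(K div L)..<K}. s k\<bar> \<le> (\<Sum>k\<in>{L*(K div L)..<K}. \<bar>s k\<bar>)"
    by (rule sum_abs)
  also have "\<dots> = real (K - L*(K div L))" using sabs by simp
  also have "\<dots> \<le> real L"
  proof -
    have "K - L*(K div L) = K mod L" by (simp add: minus_mult_div_eq_mod)
    then show ?thesis using L by simp
  qed
  finally have sb: "\<bar>\<Sum>k\<in>{L*(K div L)..<K}. s k\<bar> \<le> real L" .
  have "\<bar>-((1 - a)/real L * b^m) * (a^(K div L) * (\<Sum>k\<in>{L*(K div L)..<K}. s k))\<bar>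
      = (1 - a)/real L * b^m * a^(K div L) * \<bar>\<Sum>k\<in>{L*(K div L)..<K}. s k\<bar>"
    using a b by (simp add: abs_mult)
  also have "\<dots> \<le> (1 - a)/real L * b^m * a^(K div L) * real L"
    using a b sb by (intro mult_left_mono) auto
  also have "\<dots> = (1 - a) * (b^m * a^(K div L))" using L by simp
  also have "\<dots> \<le> 1 * (b^m * a^(K div L))"
    using a b by (intro mult_right_mono) auto
  finally show ?thesis unfolding e a_def K_def by simp
qed

lemma sq_bound:
  fixes b :: real
  assumes b: "0 < b" "b < 1" and L: "0 < L"
    and v: "\<And>m. m \<le> Nh \<Longrightarrow> \<bar>v m\<bar> \<le> b^m * (b^(2*L))^((Nh-m) div L)"
  shows "(\<Sum>m\<le>Nh. (v m)\<^sup>2) \<le> b^(2*Nh) / (b^(4*L) * (1 - b^2))"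
proof -
  have t: "(v m)\<^sup>2 \<le> b^(2*Nh) / b^(4*L) * (b^2)^(Nh-m)" if m: "m \<le> Nh" for m
  proof -
    define e where "e = Nh - m"
    define q where "q = e div L"
    have "e < L * q + L"
      using mult_div_mod_eq[of L e] mod_less_divisor[OF L, of e] unfolding q_def by linarith
    then have "2*e \<le> 2*L*q + 2*L" by linarith
    then have "b^(2*L*q + 2*L) \<le> b^(2*e)"
      using b by (intro power_decreasing) auto
    moreover have "b^(2*L*q + 2*L) = (b^(2*L))^q * b^(2*L)"
      by (simp add: power_add power_mult)
    ultimately have "(b^(2*L))^q * b^(2*L) \<le> b^(2*e)" by simp
    then have q: "(b^(2*L))^q \<le> b^(2*e) / b^(2*L)"
      using b by (simp add: le_divide_eq)
    have "\<bar>v m\<bar> \<le> b^m * (b^(2*e) / b^(2*L))"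
      using v[OF m] q b unfolding e_def q_def
      by (meson order_trans mult_left_mono zero_le_power less_imp_le)
    then have "(v m)\<^sup>2 \<le> (b^m * (b^(2*e) / b^(2*L)))\<^sup>2"
      by (metis abs_ge_zero power2_abs power_mono)
    also have "\<dots> = (b^m * b^m * b^(2*e) * b^(2*e)) / (b^(2*L) * b^(2*L))"
      by (simp add: power2_eq_square)
    also have "b^m * b^m * b^(2*e) * b^(2*e) = b^(m+m+2*e+2*e)"
      by (simp only: power_add)
    also have "m+m+2*e+2*e = 2*Nh + 2*e" using m unfolding e_def by simp
    also have "b^(2*L) * b^(2*L) = b^(4*L)"
      by (simp flip: power_add)
    also have "b^(2*Nh + 2*e) / b^(4*L) = b^(2*Nh) / b^(4*L) * (b^2)^e"
      by (simp add: power_add power_mult)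
    finally show ?thesis unfolding e_def .
  qed
  have "(\<Sum>m\<le>Nh. (v m)\<^sup>2) \<le> (\<Sum>m\<le>Nh. b^(2*Nh) / b^(4*L) * (b^2)^(Nh-m))"
    by (rule sum_mono) (use t in auto)
  also have "\<dots> = b^(2*Nh) / b^(4*L) * (\<Sum>m\<le>Nh. (b^2)^(Nh-m))"
    by (simp add: sum_distrib_left)
  also have "(\<Sum>m\<le>Nh. (b^2)^(Nh-m)) = (\<Sum>j\<le>Nh. (b^2)^j)"
    using sum.atLeastAtMost_rev[of "\<lambda>j. (b^2)^j" 0 Nh] by (simp add: atLeast0AtMost)
  also have "\<dots> = (1 - (b^2)^Suc Nh) / (1 - b^2)"
  proof -
    have "b^2 < 1^2" using b by (intro power_strict_mono) auto
    then have "b^2 \<noteq> 1" by simp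
    then show ?thesis
      using geometric_sum[of "b^2" "Suc Nh"] lessThan_Suc_atMost[of Nh]
      by (simp add: divide_simps right_diff_distrib; linarith)
  qed
  also have "\<dots> \<le> 1 / (1 - b^2)"
  proof -
    have "b^2 < 1^2" using b by (intro power_strict_mono) auto
    then have "b^2 < 1" by simp
    then show ?thesis by (intro divide_right_mono) auto
  qed
  finally show ?thesis
    using b by (simp add: mult_left_mono divide_simps)
qed

lemma normIF_le:
  assumes b: "0 < b" "b < 1" and L: "0 < L"
  shows "normIF L b Nh \<le> b^(2*Nh) / (b^(4*L) * (1 - b^2))"
  unfolding normIF_def by (rule sq_bound[OF b L]) (rule colIF[OF b L])

lemma normCCF_le:
  assumes b: "0 < b" "b < 1" and Lk: "L = 2^kk" and li: "l < L" "i < L" "l \<noteq> i"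
  shows "normCCF L b Nh l i \<le> b^(2*Nh) / (b^(4*L) * (1 - b^2))"
proof -
  have L: "0 < L" using Lk by simp
  show ?thesis
  unfolding normCCF_def by (rule sq_bound[OF b L]) (rule colCC[OF b Lk li])
qed

lemma normIF_ge:
  assumes b: "0 < b"
  shows "b^(2*Nh) \<le> normIF L b Nh"
proof -
  have col: "(\<Sum>t\<le>Nh. qvec b t * ((if t = Nh then 1 else 0) + Fmat L b t Nh)) = b^Nh"
  proof -
    have "(\<Sum>t\<le>Nh. qvec b t * ((if t = Nh then 1 else 0) + Fmat L b t Nh)) =
        (\<Sum>t\<le>Nh. (if t = Nh then b^Nh else 0))"
      by (rule sum.cong[OF refl]) (auto simp: Fmat_def qvec_def)
    also have "\<dots> = b^Nh" by simp
    finally show ?thesis .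
  qed
  have "(\<Sum>m\<in>{Nh}. (\<Sum>t\<le>Nh. qvec b t * ((if t = m then 1 else 0) + Fmat L b t m))\<^sup>2)
     \<le> normIF L b Nh"
    unfolding normIF_def by (rule sum_mono2) auto
  then show ?thesis using col by (simp add: power_mult[symmetric] mult.commute)
qed

lemma normCCF_nonneg: "0 \<le> normCCF L b Nh l i"
  unfolding normCCF_def by (rule sum_nonneg) simp

lemma pow_sub_le:
  fixes b :: real
  assumes b: "0 < b" "b \<le> 1"
  shows "b^(2*(N-L)) \<le> b^(2*N) / b^(2*L)"
proof -
  have "b^(2*(N-L) + 2*L) \<le> b^(2*N)"
    using b by (intro power_decreasing) auto
  then have "b^(2*(N-L)) * b^(2*L) \<le> b^(2*N)" by (simp add: power_add)
  then show ?thesis using b by (simp add: le_divide_eq)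
qed

lemma SNR_upper:
  assumes b: "0 < b" "b < 1" and sb: "0 < sb2" and P: "0 < P" and g: "0 \<le> \<gamma>" "\<gamma> \<le> 1"
  shows "SNR L P sb2 0 b \<gamma> N l \<le> P * real N / (real L * sb2 * b^(2*N))"
proof -
  define D where "D = sb2 * normIF L b (N - L) + (sb2 + 0) * (\<Sum>i\<in>{0..<L} - {l}. normCCF L b (N - L) l i)
      + 0 * normF L b (N - L)"
  have s: "SNR L P sb2 0 b \<gamma> N l = (P * real N * (1 - \<gamma>) / real L) / D"
    unfolding SNR_def D_def ..
  have "0 \<le> (\<Sum>i\<in>{0..<L} - {l}. normCCF L b (N - L) l i)"
    by (rule sum_nonneg) (rule normCCF_nonneg)
  then have "sb2 * normIF L b (N - L) \<le> D" unfolding D_def using sb by simp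
  moreover have "sb2 * b^(2*N) \<le> sb2 * normIF L b (N - L)"
  proof -
    have "b^(2*N) \<le> b^(2*(N-L))" using b by (intro power_decreasing) auto
    also have "\<dots> \<le> normIF L b (N - L)" by (rule normIF_ge[OF b(1)])
    finally show ?thesis using sb by simp
  qed
  ultimately have D: "sb2 * b^(2*N) \<le> D" by linarith
  have pos: "0 < sb2 * b^(2*N)" using sb b by simp
  have num: "0 \<le> P * real N * (1 - \<gamma>) / real L" using P g by simp
  have "(P * real N * (1 - \<gamma>) / real L) / D \<le> (P * real N * (1 - \<gamma>) / real L) / (sb2 * b^(2*N))"
    by (rule divide_left_mono[OF D num]) (use pos D in auto)
  also have "\<dots> \<le> (P * real N / real L) / (sb2 * b^(2*N))"
    using P g pos by (intro divide_right_mono) (auto simp: mult_left_le divide_right_mono)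
  finally show ?thesis unfolding s by (simp add: field_simps)
qed

lemma SNR_lower:
  assumes b: "0 < b" "b < 1" and sb: "0 < sb2" and P: "0 < P" and g: "\<gamma> < 1"
    and Lk: "L = 2^kk" and l: "l < L"
  shows "P * (1 - \<gamma>) * b^(6*L) * (1 - b^2) / (real L * sb2 * (1 + real L)) * real N / b^(2*N)
           \<le> SNR L P sb2 0 b \<gamma> N l"
proof -
  have L: "0 < L" using Lk by simp
  define B where "B = b^(2*(N-L)) / (b^(4*L) * (1 - b^2))"
  define D where "D = sb2 * normIF L b (N - L) + (sb2 + 0) * (\<Sum>i\<in>{0..<L} - {l}. normCCF L b (N - L) l i)
      + 0 * normF L b (N - L)"
  have s: "SNR L P sb2 0 b \<gamma> N l = (P * real N * (1 - \<gamma>) / real L) / D"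
    unfolding SNR_def D_def ..
  have b2: "b^2 < 1^2" using b by (intro power_strict_mono) auto
  have Bpos: "0 \<le> B" unfolding B_def using b b2 by simp
  have "(\<Sum>i\<in>{0..<L} - {l}. normCCF L b (N - L) l i) \<le> real (card ({0..<L} - {l})) * B"
    unfolding B_def by (rule sum_bounded_above) (rule normCCF_le[OF b Lk], use l in auto)
  also have "\<dots> \<le> real L * B"
    using Bpos by (intro mult_right_mono) (auto simp: card_Diff_singleton_if)
  finally have cc: "(\<Sum>i\<in>{0..<L} - {l}. normCCF L b (N - L) l i) \<le> real L * B" .
  have d1: "sb2 * normIF L b (N-L) \<le> sb2 * B"
    using normIF_le[OF b L, of "N - L"] sb unfolding B_def by (intro mult_left_mono) auto
  have d2: "sb2 * (\<Sum>i\<in>{0..<L} - {l}. normCCF L b (N - L) l i) \<le> sb2 * (real L * B)"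
    using cc sb by (intro mult_left_mono) auto
  have "D \<le> sb2 * B + sb2 * (real L * B)"
    unfolding D_def using d1 d2 by simp
  also have "\<dots> = sb2 * (1 + real L) * B" by (simp add: algebra_simps)
  also have "B \<le> b^(2*N) / (b^(6*L) * (1 - b^2))"
  proof -
    have "B \<le> (b^(2*N) / b^(2*L)) / (b^(4*L) * (1 - b^2))"
      unfolding B_def using pow_sub_le[of b N L] b b2 by (intro divide_right_mono) auto
    also have "\<dots> = b^(2*N) / (b^(6*L) * (1 - b^2))"
      by (simp add: field_simps power_add[symmetric])
    finally show ?thesis .
  qed
  finally have Dle: "D \<le> sb2 * (1 + real L) * (b^(2*N) / (b^(6*L) * (1 - b^2)))"
    using sb by (simp add: mult_left_mono)
  have Dpos: "0 < D"
  proof -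
    have "0 \<le> (\<Sum>i\<in>{0..<L} - {l}. normCCF L b (N - L) l i)"
      by (rule sum_nonneg) (rule normCCF_nonneg)
    moreover have "0 < normIF L b (N - L)"
      using normIF_ge[OF b(1), of "N - L" L] b by (meson less_le_trans zero_less_power)
    ultimately show ?thesis unfolding D_def using sb by (simp add: add_pos_nonneg)
  qed
  have num: "0 \<le> P * real N * (1 - \<gamma>) / real L" using P g by simp
  have "(P * real N * (1 - \<gamma>) / real L) / (sb2 * (1 + real L) * (b^(2*N) / (b^(6*L) * (1 - b^2))))
      \<le> (P * real N * (1 - \<gamma>) / real L) / D"
  proof -
    have pos2: "0 < sb2 * (1 + real L) * (b^(2*N) / (b^(6*L) * (1 - b^2)))"
      using sb b b2 by simp
    show ?thesis by (rule divide_left_mono[OF Dle num]) (rule mult_pos_pos[OF pos2 Dpos])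
  qed
  moreover have "(P * real N * (1 - \<gamma>) / real L) / (sb2 * (1 + real L) * (b^(2*N) / (b^(6*L) * (1 - b^2))))
     = P * (1 - \<gamma>) * b^(6*L) * (1 - b^2) / (real L * sb2 * (1 + real L)) * real N / b^(2*N)"
    using b b2 sb L by (simp add: field_simps)
  ultimately show ?thesis unfolding s by simp
qed

lemma Q_nonneg: "0 \<le> gaussQ y"
  unfolding gaussQ_def set_lebesgue_integral_def
  by (rule integral_nonneg_AE) (auto simp: indicator_def)

lemma integrable_ind_normal: "integrable lborel (\<lambda>t. indicator {y<..} t *\<^sub>R std_normal_density t)"
proof -
  have "integrable lborel (\<lambda>t. std_normal_density t * indicator {y<..} t)"
    by (rule integrable_real_mult_indicator) auto
  then show ?thesis by (simp add: mult.commute)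
qed

lemma Q_upper:
  assumes y: "0 < y"
  shows "gaussQ y \<le> 1 / y^2"
proof -
  have i2: "integrable lborel (\<lambda>t. std_normal_density t * t ^ (2*1) / y^2)"
    using integrable_std_normal_moment[of "2*1"] by simp
  have "gaussQ y \<le> (LINT t|lborel. std_normal_density t * t ^ (2*1) / y^2)"
    unfolding gaussQ_def set_lebesgue_integral_def
  proof (rule integral_mono[OF integrable_ind_normal i2])
    fix t
    show "indicator {y<..} t *\<^sub>R std_normal_density t \<le> std_normal_density t * t ^ (2*1) / y^2"
    proof (cases "y < t")
      case True
      then have "y^2 \<le> t^2" using y by (intro power_mono) auto
      then have "1 \<le> t^2 / y^2" using y by simp
      then have "std_normal_density t * 1 \<le> std_normal_density t * (t^2 / y^2)"
        by (intro mult_left_mono) auto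
      then show ?thesis using True by simp
    next
      case False
      then show ?thesis by simp
    qed
  qed
  also have "\<dots> = (LINT t|lborel. std_normal_density t * t ^ (2*1)) / y^2"
    by simp
  also have "(LINT t|lborel. std_normal_density t * t ^ (2*1)) = 1"
    by (subst integral_std_normal_moment_even) simp
  finally show ?thesis by simp
qed

lemma Q_lower:
  assumes y: "y \<le> 1"
  shows "std_normal_density 2 \<le> gaussQ y"
proof -
  have ii: "integrable lborel (\<lambda>t. std_normal_density 2 * indicator {1<..<2::real} t)"
    by (intro integrable_mult_right integrable_real_indicator) auto
  have "(LINT t|lborel. std_normal_density 2 * indicator {1<..<2::real} t) \<le> gaussQ y"
    unfolding gaussQ_def set_lebesgue_integral_def
  proof (rule integral_mono[OF ii integrable_ind_normal])
    fix t :: real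
    show "std_normal_density 2 * indicator {1<..<2} t \<le> indicator {y<..} t *\<^sub>R std_normal_density t"
    proof (cases "1 < t \<and> t < 2")
      case True
      then have "t^2 \<le> 2^2" by (intro power_mono) auto
      then have "std_normal_density 2 \<le> std_normal_density t"
        unfolding std_normal_density_def by (intro mult_left_mono) auto
      then show ?thesis using True y by (simp add: indicator_def)
    next
      case False
      then show ?thesis by (auto simp: indicator_def)
    qed
  qed
  moreover have "(LINT t|lborel. std_normal_density 2 * indicator {1<..<2::real} t) = std_normal_density 2"
    by (simp add: measure_def emeasure_lborel_Ioo)
  ultimately show ?thesis by simp
qed

lemma Q_lower_pos: "0 < std_normal_density 2"
  by (simp add: std_normal_density_def)

definition gfun :: "nat \<Rightarrow> real \<Rightarrow> real" where
  "gfun L \<beta> = (1 - \<beta> ^ (2 * L))\<^sup>2 / ((real L)\<^sup>2 * \<beta> ^ (2 * L) * (1 - \<beta>\<^sup>2))"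

lemma gfun_sum:
  fixes x :: real
  assumes x: "0 < x" "x < 1"
  shows "(1 - x^L)^2 / (x^L * (1 - x)) = (\<Sum>k<L. ((1/x)^(L-k) - x^k))"
proof -
  have "(\<Sum>k<L. ((1/x)^(L-k) - x^k)) = (\<Sum>k<L. x^k * (1/x^L - 1))"
  proof (rule sum.cong[OF refl])
    fix k assume "k \<in> {..<L}"
    then have "k \<le> L" by simp
    then have "x^L = x^(L-k) * x^k" by (simp add: power_add[symmetric])
    then show "(1/x)^(L-k) - x^k = x^k * (1/x^L - 1)"
      using x by (simp add: power_one_over field_simps)
  qed
  also have "\<dots> = (\<Sum>k<L. x^k) * (1/x^L - 1)" by (simp add: sum_distrib_right)
  also have "(\<Sum>k<L. x^k) = (1 - x^L) / (1 - x)"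
    using geometric_sum[of x L] x by (simp add: divide_simps right_diff_distrib; linarith)
  finally show ?thesis using x by (simp add: field_simps power2_eq_square)
qed

lemma gfun_eq:
  assumes b: "0 < b" "b < 1" and L: "0 < L"
  shows "gfun L b = (\<Sum>k<L. ((1/b^2)^(L-k) - (b^2)^k)) / (real L)^2"
proof -
  have x: "0 < b^2" "b^2 < 1" using b by (auto simp: power_less_one_iff)
  have "gfun L b = (1 - (b^2)^L)^2 / ((b^2)^L * (1 - b^2)) / (real L)^2"
  proof -
    have "b^(2*L) = (b^2)^L" by (simp add: power_mult)
    then show ?thesis unfolding gfun_def by (simp add: divide_divide_eq_left mult_ac)
  qed
  then show ?thesis using gfun_sum[OF x, of L] by simp
qed

lemma gfun_strict:
  assumes b: "0 < b" "b < c" "c < 1" and L: "0 < L"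
  shows "gfun L c < gfun L b"
proof -
  have b2: "b^2 < c^2" using b by (intro power_strict_mono) auto
  have "(\<Sum>k<L. ((1/c^2)^(L-k) - (c^2)^k)) < (\<Sum>k<L. ((1/b^2)^(L-k) - (b^2)^k))"
  proof (rule sum_strict_mono)
    fix k assume k: "k \<in> {..<L}"
    have "1/c^2 < 1/b^2" using b b2 by (intro divide_strict_left_mono) auto
    then have "(1/c^2)^(L-k) < (1/b^2)^(L-k)"
      using k b by (intro power_strict_mono) auto
    moreover have "(b^2)^k \<le> (c^2)^k" using b2 b by (intro power_mono) auto
    ultimately show "(1/c^2)^(L-k) - (c^2)^k < (1/b^2)^(L-k) - (b^2)^k" by linarith
  qed (use L in auto)
  then show ?thesis
    using gfun_eq[OF b(1) _ L] gfun_eq[of c L] b L by (simp add: divide_strict_right_mono)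
qed

lemma gfun_pos:
  assumes b: "0 < b" "b < 1" and L: "0 < L"
  shows "0 < gfun L b"
proof -
  have "b^(2*L) < 1" using b L by (simp add: power_less_one_iff)
  moreover have "b^2 < 1" using b by (simp add: power_less_one_iff)
  ultimately show ?thesis unfolding gfun_def using b L by simp
qed

lemma two_powr_log:
  assumes b: "0 < \<beta>"
  shows "2 powr (2 * real N * (- log 2 \<beta>)) = 1 / \<beta>^(2*N)"
proof -
  have "2 powr (2 * real N * (- log 2 \<beta>)) = (2 powr (log 2 \<beta>)) powr (- real (2*N))"
    by (simp add: powr_powr mult_ac)
  also have "\<dots> = \<beta> powr (- real (2*N))" using b by simp
  also have "\<dots> = 1 / \<beta>^(2*N)" using b powr_realpow[of \<beta> "2*N"] by (simp add: powr_minus divide_inverse)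
  finally show ?thesis .
qed

lemma beta_eq_gfun:
  "beta_eq L P sb2 0 \<gamma> \<beta> \<longleftrightarrow> 0 < \<beta> \<and> \<beta> < 1 \<and> gfun L \<beta> = P * \<gamma> / (real L * sb2)"
  unfolding beta_eq_def gfun_def by simp

lemma ach_lower:
  fixes L :: nat and P sb2 \<beta>inf \<beta> :: real
  assumes Lk: "L = 2^kk" and P: "0 < P" and sb: "0 < sb2"
    and bi: "0 < \<beta>inf" "\<beta>inf < \<beta>" "\<beta> < 1"
    and geq: "gfun L \<beta>inf = P / (sb2 * real L)"
  shows "achievable L P sb2 0 (- log 2 \<beta>)"
proof -
  have L: "0 < L" using Lk by simp
  have b: "0 < \<beta>" "\<beta> < 1" using bi by auto
  define \<gamma> where "\<gamma> = gfun L \<beta> * real L * sb2 / P"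
  have gpos: "0 < gfun L \<beta>" by (rule gfun_pos[OF b L])
  have glt: "gfun L \<beta> < gfun L \<beta>inf" by (rule gfun_strict[OF bi L])
  have g0: "0 < \<gamma>" unfolding \<gamma>_def using gpos L sb P by simp
  have g1: "\<gamma> < 1"
  proof -
    have "gfun L \<beta> * (real L * sb2) < P / (sb2 * real L) * (real L * sb2)"
      using glt geq L sb by (intro mult_strict_right_mono) auto
    also have "\<dots> = P" using L sb by simp
    finally show ?thesis unfolding \<gamma>_def using P by (simp add: divide_less_eq mult.assoc)
  qed
  have beq: "beta_eq L P sb2 0 \<gamma> \<beta>"
    unfolding beta_eq_gfun \<gamma>_def using b L sb P by simp
  have R0: "0 \<le> - log 2 \<beta>" using b by simp
  define c0 where "c0 = P * (1 - \<gamma>) * \<beta>^(6*L) * (1 - \<beta>^2) / (real L * sb2 * (1 + real L))"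
  have b2: "\<beta>^2 < 1^2" using b by (intro power_strict_mono) auto
  have c0: "0 < c0" unfolding c0_def using P g1 b b2 L sb by simp
  have lim: "(\<lambda>N. Pe L P sb2 0 \<beta> \<gamma> N (- log 2 \<beta>) l) \<longlonglongrightarrow> 0" if l: "l < L" for l
  proof (rule tendsto_sandwich[of "\<lambda>N. 0" _ sequentially "\<lambda>N. (1 / (3 * c0)) / real N"])
    show "(\<lambda>N. 0::real) \<longlonglongrightarrow> 0" by simp
    show "(\<lambda>N. (1 / (3 * c0)) / real N) \<longlonglongrightarrow> 0" by (rule lim_const_over_n)
    show "eventually (\<lambda>N. 0 \<le> Pe L P sb2 0 \<beta> \<gamma> N (- log 2 \<beta>) l) sequentially"
    proof (rule always_eventually, rule allI)
      fix N
      have "1 \<le> 2 powr (2 * real N * (- log 2 \<beta>))"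
        using R0 by (intro ge_one_powr_ge_zero mult_nonneg_nonneg) auto
      then have h1: "1 / 2 powr (2 * real N * (- log 2 \<beta>)) \<le> 1"
        by (simp add: divide_le_eq)
      then show "0 \<le> Pe L P sb2 0 \<beta> \<gamma> N (- log 2 \<beta>) l"
        unfolding Pe_def by (intro mult_nonneg_nonneg) (use h1 Q_nonneg in auto)
    qed
    show "eventually (\<lambda>N. Pe L P sb2 0 \<beta> \<gamma> N (- log 2 \<beta>) l \<le> (1 / (3 * c0)) / real N) sequentially"
      using eventually_ge_at_top[of "1::nat"]
    proof eventually_elim
      case (elim N)
      define M where "M = 2 powr (2 * real N * (- log 2 \<beta>))"
      define S where "S = SNR L P sb2 0 \<beta> \<gamma> N l"
      define X where "X = 6 / (M - 1) * S"
      have M: "M = 1 / \<beta>^(2*N)" unfolding M_def by (rule two_powr_log[OF b(1)])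
      have bN: "0 < \<beta>^(2*N)" "\<beta>^(2*N) < 1" using b elim by (auto simp: power_less_one_iff)
      have M1: "1 < M" unfolding M using bN by simp
      have S: "c0 * real N / \<beta>^(2*N) \<le> S"
        unfolding S_def c0_def using SNR_lower[OF b sb P g1 Lk l, of N] by simp
      have "6 / M * S \<le> 6 / (M - 1) * S"
      proof (rule mult_right_mono)
        show "6 / M \<le> 6 / (M - 1)" using M1 by (intro divide_left_mono) auto
        have "0 \<le> c0 * real N / \<beta>^(2*N)" using c0 bN by simp
        then show "0 \<le> S" using S by linarith
      qed
      moreover have "6 / M * S \<ge> 6 * c0 * real N"
      proof -
        have "6 / M * S = 6 * \<beta>^(2*N) * S" unfolding M by simp
        also have "\<dots> \<ge> 6 * \<beta>^(2*N) * (c0 * real N / \<beta>^(2*N))"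
          using S bN by (intro mult_left_mono) auto
        also have "6 * \<beta>^(2*N) * (c0 * real N / \<beta>^(2*N)) = 6 * c0 * real N"
          using bN b by simp
        finally show ?thesis .
      qed
      ultimately have X: "6 * c0 * real N \<le> X" unfolding X_def by linarith
      have pos6: "0 < 6 * c0 * real N" using c0 elim by simp
      then have Xpos: "0 < X" using X by linarith
      have Q: "gaussQ (sqrt X) \<le> 1 / X"
        using Q_upper[of "sqrt X"] Xpos by simp
      have m1: "0 < 1 / M" "1 / M \<le> 1" using M1 by auto
      then have pre: "0 \<le> 2 * (1 - 1 / M)" "2 * (1 - 1 / M) \<le> 2" by (smt (verit))+
      have "Pe L P sb2 0 \<beta> \<gamma> N (- log 2 \<beta>) l = 2 * (1 - 1 / M) * gaussQ (sqrt X)"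
        unfolding Pe_def M_def X_def S_def ..
      also have "\<dots> \<le> 2 * (1 / X)"
        using pre Q Q_nonneg[of "sqrt X"] by (intro mult_mono) auto
      also have "\<dots> \<le> 2 * (1 / (6 * c0 * real N))"
      proof -
        have "1 / X \<le> 1 / (6 * c0 * real N)"
          by (rule divide_left_mono[OF X]) (use pos6 Xpos in auto)
        then show ?thesis by simp
      qed
      also have "\<dots> = (1 / (3 * c0)) / real N" by simp
      finally show ?case .
    qed
  qed
  show ?thesis unfolding achievable_def using R0 g0 g1 beq lim by blast
qed

lemma ach_upper:
  fixes L :: nat and P sb2 \<beta>inf R :: real
  assumes Lk: "L = 2^kk" and P: "0 < P" and sb: "0 < sb2"
    and bi: "0 < \<beta>inf" "\<beta>inf < 1"
    and geq: "gfun L \<beta>inf = P / (sb2 * real L)"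
    and ach: "achievable L P sb2 0 R"
  shows "R \<le> - log 2 \<beta>inf"
proof -
  have L: "0 < L" using Lk by simp
  obtain \<gamma> \<beta> where g: "0 < \<gamma>" "\<gamma> < 1" and beq: "beta_eq L P sb2 0 \<gamma> \<beta>"
    and lim0: "(\<lambda>N. Pe L P sb2 0 \<beta> \<gamma> N R 0) \<longlonglongrightarrow> 0"
    using ach L unfolding achievable_def by blast
  have b: "0 < \<beta>" "\<beta> < 1" and gb: "gfun L \<beta> = P * \<gamma> / (real L * sb2)"
    using beq unfolding beta_eq_gfun by auto
  have "gfun L \<beta> < gfun L \<beta>inf"
  proof -
    have "P * \<gamma> / (real L * sb2) < P * 1 / (real L * sb2)"
      using P g L sb by (intro divide_strict_right_mono) auto
    then show ?thesis using gb geq by (simp add: mult.commute)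
  qed
  then have bb: "\<beta>inf < \<beta>"
  proof -
    assume gl: "gfun L \<beta> < gfun L \<beta>inf"
    show ?thesis
    proof (rule ccontr)
      assume "\<not> \<beta>inf < \<beta>"
      then consider "\<beta> < \<beta>inf" | "\<beta> = \<beta>inf" by linarith
      then show False using gfun_strict[of \<beta> \<beta>inf L] b bi L gl by cases auto
    qed
  qed
  have lb: "- log 2 \<beta> < - log 2 \<beta>inf" using bb bi by simp
  have "R \<le> - log 2 \<beta>"
  proof (rule ccontr)
    assume "\<not> R \<le> - log 2 \<beta>"
    then have Rgt: "- log 2 \<beta> < R" by simp
    have R0: "0 < R" using Rgt b by (smt (verit) log_less_zero_cancel_iff)
    define \<rho> where "\<rho> = 2 powr (2 * R)"
    have \<rho>pos: "0 < \<rho>" unfolding \<rho>_def by simp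
    have \<rho>N: "2 powr (2 * real N * R) = \<rho>^N" for N
    proof -
      have "2 powr (2 * real N * R) = (2 powr (2 * R)) powr real N" by (simp add: powr_powr mult_ac)
      then show ?thesis unfolding \<rho>_def by (simp add: powr_realpow)
    qed
    define \<theta> where "\<theta> = \<rho> * \<beta>^2"
    have "1 / \<beta>^(2*1) < \<rho>"
    proof -
      have hA: "2 powr (2 * real (1::nat) * (- log 2 \<beta>)) < 2 powr (2 * R)"
        using Rgt by simp
      have h: "2 powr (2 * real (1::nat) * (- log 2 \<beta>)) = 1 / \<beta>^(2*1)"
        by (rule two_powr_log[OF b(1)])
      show ?thesis using hA unfolding h \<rho>_def .
    qed
    then have "1 / \<beta>^2 < \<rho>" by simp
    then have th1: "1 < \<theta>" unfolding \<theta>_def using b by (simp add: divide_less_eq mult.commute)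
    have b2: "\<beta>^2 \<le> 1" using b by (simp add: power_le_one)
    have e1: "eventually (\<lambda>N. 1 / \<theta>^N < 1/2) sequentially"
      using LIMSEQ_divide_realpow_zero[OF th1, of 1] by (rule order_tendstoD) simp
    have "(\<lambda>N. real N / \<theta>^N) \<longlonglongrightarrow> 0" using lim_n_over_pown[of \<theta>] th1 by simp
    then have e2: "eventually (\<lambda>N. real N / \<theta>^N < real L * sb2 / (12 * P)) sequentially"
      by (rule order_tendstoD) (use L sb P in simp)
    have e3: "eventually (\<lambda>N. Pe L P sb2 0 \<beta> \<gamma> N R 0 < std_normal_density 2) sequentially"
      using lim0 by (rule order_tendstoD) (rule Q_lower_pos)
    have "eventually (\<lambda>N. False) sequentially"
      using e1 e2 e3
    proof eventually_elim
      case (elim N)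
      define S where "S = SNR L P sb2 0 \<beta> \<gamma> N 0"
      define X where "X = 6 / (\<rho>^N - 1) * S"
      have thN: "\<theta>^N = \<rho>^N * (\<beta>^2)^N" unfolding \<theta>_def by (simp add: power_mult_distrib)
      have th2: "2 < \<theta>^N" using elim(1) th1 by (simp add: divide_less_eq)
      have "\<theta>^N \<le> \<rho>^N" unfolding thN using \<rho>pos b2 b
        by (simp add: mult_left_le power_le_one)
      then have r2: "2 < \<rho>^N" using th2 by simp
      have Sup: "S \<le> P * real N / (real L * sb2 * \<beta>^(2*N))"
        unfolding S_def using SNR_upper[OF b sb P] g by simp
      have XS: "X \<le> 6 / (\<rho>^N / 2) * (P * real N / (real L * sb2 * \<beta>^(2*N)))"
      proof (cases "S \<le> 0")
        case True
        have "0 \<le> 6 / (\<rho>^N - 1)" using r2 by simp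
        then have "X \<le> 0" unfolding X_def using True by (rule mult_nonneg_nonpos)
        moreover have "0 \<le> 6 / (\<rho>^N / 2) * (P * real N / (real L * sb2 * \<beta>^(2*N)))"
          using r2 P L sb b by simp
        ultimately show ?thesis by linarith
      next
        case False
        have "6 / (\<rho>^N - 1) \<le> 6 / (\<rho>^N / 2)"
          using r2 by (intro divide_left_mono) auto
        then have "X \<le> 6 / (\<rho>^N / 2) * S" unfolding X_def using False
          by (intro mult_right_mono) auto
        also have "\<dots> \<le> 6 / (\<rho>^N / 2) * (P * real N / (real L * sb2 * \<beta>^(2*N)))"
          using Sup r2 by (intro mult_left_mono) auto
        finally show ?thesis .
      qed
      also have "6 / (\<rho>^N / 2) * (P * real N / (real L * sb2 * \<beta>^(2*N)))
          = (12 * P / (real L * sb2)) * (real N / \<theta>^N)"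
      proof -
        have pw2: "(\<beta>^N)^2 = (\<beta>^2)^N" by (metis power_mult mult.commute)
        show ?thesis unfolding thN using b L sb r2 pw2 by (simp add: power_mult field_simps)
      qed
      also have "\<dots> < (12 * P / (real L * sb2)) * (real L * sb2 / (12 * P))"
        using elim(2) P L sb by (intro mult_strict_left_mono) auto
      also have "\<dots> = 1" using P L sb by simp
      finally have X1: "X < 1" .
      have Q: "std_normal_density 2 \<le> gaussQ (sqrt X)"
        by (rule Q_lower) (use X1 in simp)
      have pre: "1 \<le> 2 * (1 - 1 / \<rho>^N)" using r2 by (simp add: field_simps)
      have "Pe L P sb2 0 \<beta> \<gamma> N R 0 = 2 * (1 - 1 / \<rho>^N) * gaussQ (sqrt X)"
        unfolding Pe_def X_def S_def \<rho>N ..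
      also have "\<dots> \<ge> 1 * std_normal_density 2"
        using pre Q by (intro mult_mono) (auto simp: less_imp_le[OF Q_lower_pos])
      finally show False using elim(3) by simp
    qed
    then show False by simp
  qed
  then show ?thesis using lb by simp
qed

lemma main:
  fixes L :: nat and P sb2 \<beta>inf :: real
  assumes "\<exists>k. L = 2 ^ k"
    and "P > 0" and "sb2 > 0"
    and "0 < \<beta>inf" and "\<beta>inf < 1"
    and "(1 - \<beta>inf ^ (2 * L))\<^sup>2 / ((real L)\<^sup>2 * \<beta>inf ^ (2 * L) * (1 - \<beta>inf\<^sup>2))
           = P / (sb2 * real L)"
  shows "Csum L P sb2 0 = - real L * log 2 \<beta>inf"
proof -
  obtain kk where Lk: "L = 2^kk" using assms(1) by blast
  have L: "0 < L" using Lk by simp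
  have P: "0 < P" and sb: "0 < sb2" and bi: "0 < \<beta>inf" "\<beta>inf < 1" using assms by auto
  have geq: "gfun L \<beta>inf = P / (sb2 * real L)" using assms(6) unfolding gfun_def .
  let ?S = "(\<lambda>R. real L * R) ` {R. achievable L P sb2 0 R}"
  have "Sup ?S = real L * (- log 2 \<beta>inf)"
  proof (rule cSup_eq_non_empty)
    have "achievable L P sb2 0 (- log 2 ((\<beta>inf + 1) / 2))"
      by (rule ach_lower[OF Lk P sb bi(1) _ _ geq]) (use bi in auto)
    then show "?S \<noteq> {}" by blast
  next
    fix x assume "x \<in> ?S"
    then obtain R where x: "x = real L * R" and R: "achievable L P sb2 0 R" by blast
    have "R \<le> - log 2 \<beta>inf" by (rule ach_upper[OF Lk P sb bi geq R])
    then show "x \<le> real L * (- log 2 \<beta>inf)" unfolding x by (intro mult_left_mono) auto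
  next
    fix y assume ub: "\<And>x. x \<in> ?S \<Longrightarrow> x \<le> y"
    show "real L * (- log 2 \<beta>inf) \<le> y"
    proof (rule ccontr)
      assume "\<not> ?thesis"
      then have yl: "y < real L * (- log 2 \<beta>inf)" by simp
      define u where "u = 2 powr (- y / real L)"
      have upos: "0 < u" unfolding u_def by simp
      have "log 2 \<beta>inf < - y / real L"
        using yl L by (simp add: field_simps)
      then have "2 powr (log 2 \<beta>inf) < u" unfolding u_def by simp
      then have bu: "\<beta>inf < u" using bi by simp
      define \<beta>1 where "\<beta>1 = (\<beta>inf + min 1 u) / 2"
      have b1: "\<beta>inf < \<beta>1" "\<beta>1 < 1" "\<beta>1 < u" unfolding \<beta>1_def using bu bi by auto
      have "achievable L P sb2 0 (- log 2 \<beta>1)"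
        by (rule ach_lower[OF Lk P sb bi(1) b1(1) b1(2) geq])
      then have "real L * (- log 2 \<beta>1) \<le> y" using ub by blast
      moreover have "log 2 \<beta>1 < log 2 u" using b1 bi by simp
      then have "log 2 \<beta>1 < - y / real L" unfolding u_def by simp
      then have "y < real L * (- log 2 \<beta>1)" using L by (simp add: field_simps)
      ultimately show False by simp
    qed
  qed
  then show ?thesis unfolding Csum_def by simp
qed

theorem lemma2:
  fixes L :: nat and P sb2 \<beta>inf :: real
  assumes "\<exists>k. L = 2 ^ k"
    and "P > 0" and "sb2 > 0"
    and "0 < \<beta>inf" and "\<beta>inf < 1"
    and "(1 - \<beta>inf ^ (2 * L))\<^sup>2 / ((real L)\<^sup>2 * \<beta>inf ^ (2 * L) * (1 - \<beta>inf\<^sup>2))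
           = P / (sb2 * real L)"
  shows "Csum L P sb2 0 = - real L * log 2 \<beta>inf"
    using assms by (rule main)

end
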